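(* Let $A,B:\mathcal K\to\mathcal K$ be linear maps such that $(A,B):\mathcal K\oplus\mathcal K\to\mathcal K$ has rank $\dim\mathcal K$ and $AB^\dagger$ is self-adjoint. Assume that $\det(A-\varkappa B)\neq0$ for some $\varkappa>0$. Then $\mathfrak S(i\varkappa;A,B)$ is self-adjoint. If $L\leq0$, then $\mathfrak S(i\varkappa;A,B)$ is a contraction for all $\varkappa>0$.
   Context: $\mathcal K$ is a finite-dimensional complex Hilbert space. For $\mathsf k\in\mathbb C$ with $\det(A+i\mathsf kB)\neq0$, $\mathfrak S(\mathsf k;A,B)=-(A+i\mathsf kB)^{-1}(A-i\mathsf kB)$; in particular $\mathfrak S(i\varkappa;A,B)=-(A-\varkappa B)^{-1}(A+\varkappa B)$. $P_{\ker B}$ denotes the orthogonal projection onto $\ker B$, $P^\perp_{\ker B}=\mathbb I-P_{\ker B}$, and $L=(B|_{\operatorname{Ran}B^\dagger})^{-1}AP^\perp_{\ker B}$, a self-adjoint operator on $\mathcal K$. *)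

theory Defs
  imports "HOL-Analysis.Analysis"
begin

text \<open>The finite-dimensional complex Hilbert space K is modelled as complex^'n
  (with 'n an arbitrary finite index type); linear maps K to K are matrices complex^'n^'n.\<close>

definition cinner :: "complex^'n \<Rightarrow> complex^'n \<Rightarrow> complex" where
  "cinner x y = (\<Sum>i\<in>UNIV. cnj (x $ i) * y $ i)"

definition madj :: "complex^'n^'m \<Rightarrow> complex^'m^'n" where
  "madj A = (\<chi> i j. cnj (A $ j $ i))"

definition cscale :: "complex \<Rightarrow> complex^'n^'m \<Rightarrow> complex^'n^'m" where
  "cscale c A = (\<chi> i j. c * A $ i $ j)"

definition self_adjoint :: "complex^'n^'n \<Rightarrow> bool" where
  "self_adjoint A \<longleftrightarrow> madj A = A"

definition contraction :: "complex^'n^'n \<Rightarrow> bool" where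
  "contraction S \<longleftrightarrow> (\<forall>x. norm (S *v x) \<le> norm x)"

definition Sfrak :: "complex \<Rightarrow> complex^'n^'n \<Rightarrow> complex^'n^'n \<Rightarrow> complex^'n^'n" where
  "Sfrak k A B = - (matrix_inv (A + cscale (\<i> * k) B) ** (A - cscale (\<i> * k) B))"

definition orth_proj :: "(complex^'n) set \<Rightarrow> complex^'n \<Rightarrow> complex^'n" where
  "orth_proj V x = (THE v. v \<in> V \<and> (\<forall>w\<in>V. cinner w (x - v) = 0))"

definition kernel :: "complex^'n^'m \<Rightarrow> (complex^'n) set" where
  "kernel B = {x. B *v x = 0}"

definition ran :: "complex^'n^'m \<Rightarrow> (complex^'m) set" where
  "ran B = range (\<lambda>x. B *v x)"

definition Pperp_ker :: "complex^'n^'n \<Rightarrow> complex^'n \<Rightarrow> complex^'n" where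
  "Pperp_ker B x = x - orth_proj (kernel B) x"

text \<open>L = (B restricted to Ran B^\<dagger>)^{-1} A P_{ker B}^\<bottom>, as an operator on K.\<close>
definition Lop :: "complex^'n^'n \<Rightarrow> complex^'n^'n \<Rightarrow> complex^'n \<Rightarrow> complex^'n" where
  "Lop A B x = (THE w. w \<in> ran (madj B) \<and> B *v w = A *v Pperp_ker B x)"

definition nonpos_op :: "(complex^'n \<Rightarrow> complex^'n) \<Rightarrow> bool" where
  "nonpos_op L \<longleftrightarrow> (\<forall>x. Im (cinner x (L x)) = 0 \<and> Re (cinner x (L x)) \<le> 0)"

end

theory Submission
  imports Defs
begin

lemma madj_madj[simp]: "madj (madj A) = A"
  by (simp add: madj_def vec_eq_iff)

lemma madj_mult: "madj (A ** B) = madj B ** madj A"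
  by (simp add: madj_def vec_eq_iff matrix_matrix_mult_def cnj_sum mult.commute)

lemma madj_add: "madj (A + B) = madj A + madj B"
  by (simp add: madj_def vec_eq_iff)
lemma madj_diff: "madj (A - B) = madj A - madj B"
  by (simp add: madj_def vec_eq_iff)
lemma madj_uminus: "madj (- A) = - madj A"
  by (simp add: madj_def vec_eq_iff)
lemma madj_cscale: "madj (cscale c A) = cscale (cnj c) (madj A)"
  by (simp add: madj_def cscale_def vec_eq_iff)
lemma madj_mat1: "madj (mat 1 :: complex^'n^'n) = mat 1"
  by (simp add: madj_def vec_eq_iff mat_def)

lemma cinner_madj: "cinner x (M *v y) = cinner (madj M *v x) y"
proof -
  have "cinner x (M *v y) = (\<Sum>i\<in>UNIV. \<Sum>j\<in>UNIV. cnj (x $ i) * (M $ i $ j * y $ j))"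
    by (simp add: cinner_def matrix_vector_mult_def sum_distrib_left)
  also have "\<dots> = (\<Sum>j\<in>UNIV. \<Sum>i\<in>UNIV. cnj (x $ i) * (M $ i $ j * y $ j))"
    by (rule sum.swap)
  also have "\<dots> = cinner (madj M *v x) y"
    by (simp add: cinner_def matrix_vector_mult_def madj_def cnj_sum sum_distrib_right sum_distrib_left mult_ac)
  finally show ?thesis .
qed

lemma cinner_madj': "cinner (M *v x) y = cinner x (madj M *v y)"
  using cinner_madj[of x "madj M" y] by simp

lemma inner_cinner: "(x::complex^'n) \<bullet> y = Re (cinner x y)"
  by (simp add: inner_vec_def cinner_def inner_complex_def Re_sum)

lemma cinner_self_eq0: "cinner x x = 0 \<Longrightarrow> x = 0"
  by (metis inner_cinner inner_eq_zero_iff zero_complex.simps(1))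

lemma cscale_mv: "cscale c A *v x = c *s (A *v x)"
  by (simp add: cscale_def vec_eq_iff matrix_vector_mult_def sum_distrib_left mult_ac)

lemma cscale_real: "complex_of_real r *s (x::complex^'n) = r *\<^sub>R x"
  proof (rule vec_eq_iff[THEN iffD2, rule_format])
  fix i show "(complex_of_real r *s x) $ i = (r *\<^sub>R x) $ i"
    unfolding vector_smult_component vector_scaleR_component by (simp add: scaleR_conv_of_real)
qed

lemma madj_inv:
  assumes "invertible M"
  shows "madj (matrix_inv M) ** madj M = mat 1" "madj M ** madj (matrix_inv M) = mat 1"
proof -
  have "M ** matrix_inv M = mat 1 \<and> matrix_inv M ** M = mat 1"
    using assms unfolding invertible_def matrix_inv_def by (rule someI_ex)
  then show "madj (matrix_inv M) ** madj M = mat 1" "madj M ** madj (matrix_inv M) = mat 1"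
    by (metis madj_mult madj_mat1)+
qed

lemma inv_props:
  assumes "invertible M"
  shows "M ** matrix_inv M = mat 1" "matrix_inv M ** M = mat 1"
  using someI_ex[of "\<lambda>A'. M ** A' = mat 1 \<and> A' ** M = mat 1"] assms
  unfolding invertible_def matrix_inv_def by auto

lemma mv_scaleR: "(M::complex^'n^'m) *v (c *\<^sub>R x) = c *\<^sub>R (M *v x)"
  by (simp add: vec_eq_iff matrix_vector_mult_def scaleR_sum_right)

lemma mv_uminus: "(- (X::complex^'n^'m)) *v z = - (X *v z)"
  by (simp add: vec_eq_iff matrix_vector_mult_def sum_negf)

lemma cinner_0_left[simp]: "cinner 0 y = 0"
  by (simp add: cinner_def)
lemma cinner_diff_right: "cinner x (y - z) = cinner x y - cinner x z"
  by (simp add: cinner_def sum_subtractf right_diff_distrib)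
lemma cinner_add_right: "cinner x (y + z) = cinner x y + cinner x z"
  by (simp add: cinner_def sum.distrib distrib_left)

lemma subspace_ran: "subspace (ran (M::complex^'n^'m))"
  unfolding subspace_def ran_def
proof (intro conjI ballI allI)
  show "0 \<in> range ((*v) M)" by (rule range_eqI[of _ _ 0]) simp
  fix x y assume "x \<in> range ((*v) M)" "y \<in> range ((*v) M)"
  then obtain a b where "x = M *v a" "y = M *v b" by auto
  then show "x + y \<in> range ((*v) M)" by (auto intro!: range_eqI[of _ _ "a + b"] simp: matrix_vector_right_distrib)
next
  fix c x assume "x \<in> range ((*v) M)"
  then obtain a where "x = M *v a" by auto
  then show "c *\<^sub>R x \<in> range ((*v) M)" by (auto intro!: range_eqI[of _ _ "c *\<^sub>R a"] simp: mv_scaleR)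
qed

lemma Lop_val:
  assumes sa: "self_adjoint (A ** madj B)"
  shows "cinner (madj B *v y) (Lop A B (madj B *v y)) = cinner y (A *v (madj B *v y))"
proof -
  define x where "x = madj B *v y"
  have "orth_proj (kernel B) x = 0"
    unfolding orth_proj_def
  proof (rule the_equality)
    show "0 \<in> kernel B \<and> (\<forall>w\<in>kernel B. cinner w (x - 0) = 0)"
      by (simp add: kernel_def x_def cinner_madj)
  next
    fix v assume v: "v \<in> kernel B \<and> (\<forall>w\<in>kernel B. cinner w (x - v) = 0)"
    then have "cinner v (x - v) = 0" by blast
    moreover have "cinner v x = 0" using v by (simp add: kernel_def x_def cinner_madj)
    ultimately have "cinner v v = 0" by (simp add: cinner_diff_right)
    then show "v = 0" by (rule cinner_self_eq0)
  qed
  then have P: "Pperp_ker B x = x" by (simp add: Pperp_ker_def)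
  have BA: "B ** madj A = A ** madj B"
    using sa unfolding self_adjoint_def by (metis madj_mult madj_madj)
  have ex: "\<exists>w. w \<in> ran (madj B) \<and> B *v w = A *v x"
  proof -
    obtain w k where w: "w \<in> span (ran (madj B))"
      and k: "\<And>u. u \<in> span (ran (madj B)) \<Longrightarrow> orthogonal k u"
      and eq: "madj A *v y = w + k"
      using orthogonal_subspace_decomp_exists by blast
    have sp: "span (ran (madj B)) = ran (madj B)"
      using subspace_ran span_eq_iff by blast
    have "madj B *v (B *v k) \<in> span (ran (madj B))" by (rule span_base) (simp add: ran_def)
    then have "orthogonal k (madj B *v (B *v k))"
      using k by blast
    then have "Re (cinner (B *v k) (B *v k)) = 0"
      by (simp add: orthogonal_def inner_cinner cinner_madj)
    then have "(B *v k) \<bullet> (B *v k) = 0" by (simp add: inner_cinner)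
    then have Bk: "B *v k = 0" by simp
    have "B *v w = B *v (madj A *v y)"
      using eq Bk by (simp add: matrix_vector_right_distrib)
    also have "\<dots> = A *v x"
      by (simp add: x_def matrix_vector_mul_assoc BA)
    finally show ?thesis using w sp by blast
  qed
  have uq: "w1 = w2" if "w1 \<in> ran (madj B) \<and> B *v w1 = A *v x"
      "w2 \<in> ran (madj B) \<and> B *v w2 = A *v x" for w1 w2
  proof -
    from that obtain u1 u2 where u: "w1 = madj B *v u1" "w2 = madj B *v u2"
      by (auto simp: ran_def)
    have "B *v (madj B *v (u1 - u2)) = 0"
      using that u by (simp add: matrix_vector_mult_diff_distrib)
    then have "cinner (madj B *v (u1 - u2)) (madj B *v (u1 - u2)) = 0"
      by (simp only: cinner_madj' madj_madj) (simp add: cinner_def)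
    then have "madj B *v (u1 - u2) = 0" by (rule cinner_self_eq0)
    then show ?thesis using u by (simp add: matrix_vector_mult_diff_distrib)
  qed
  have "\<exists>!w. w \<in> ran (madj B) \<and> B *v w = A *v Pperp_ker B x"
    using ex uq P by metis
  then have L: "Lop A B x \<in> ran (madj B) \<and> B *v Lop A B x = A *v x"
    unfolding Lop_def using theI'[of "\<lambda>w. w \<in> ran (madj B) \<and> B *v w = A *v Pperp_ker B x"] P
    by simp
  then obtain u where u: "Lop A B x = madj B *v u" by (auto simp: ran_def)
  have "cinner x (Lop A B x) = cinner y (B *v Lop A B x)"
    by (simp add: x_def u cinner_madj')
  also have "\<dots> = cinner y (A *v x)" using L by simp
  finally show ?thesis by (simp add: x_def)
qed

lemma comm_NM:
  fixes k :: real
  assumes sa: "self_adjoint (A ** madj B)"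
  shows "(A + cscale (of_real k) B) ** madj (A - cscale (of_real k) B) =
         (A - cscale (of_real k) B) ** madj (A + cscale (of_real k) B)"
proof -
  have h: "(\<Sum>l\<in>UNIV. A$i$l * cnj (B$j$l)) = (\<Sum>l\<in>UNIV. B$i$l * cnj (A$j$l))" for i j
  proof -
    have "(A ** madj B) $ i $ j = madj (A ** madj B) $ i $ j" using sa by (simp add: self_adjoint_def)
    then show ?thesis by (simp add: matrix_matrix_mult_def madj_def cnj_sum mult.commute)
  qed
  let ?c = "complex_of_real k"
  have L: "((A + cscale ?c B) ** madj (A - cscale ?c B))$i$j =
     (\<Sum>l\<in>UNIV. A$i$l * cnj (A$j$l)) + ?c * (\<Sum>l\<in>UNIV. B$i$l * cnj (A$j$l))
     - ?c * (\<Sum>l\<in>UNIV. A$i$l * cnj (B$j$l)) - ?c * ?c * (\<Sum>l\<in>UNIV. B$i$l * cnj (B$j$l))" for i j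
    by (simp add: matrix_matrix_mult_def madj_def cscale_def algebra_simps sum.distrib
        sum_subtractf sum_distrib_left)
  have R: "((A - cscale ?c B) ** madj (A + cscale ?c B))$i$j =
     (\<Sum>l\<in>UNIV. A$i$l * cnj (A$j$l)) - ?c * (\<Sum>l\<in>UNIV. B$i$l * cnj (A$j$l))
     + ?c * (\<Sum>l\<in>UNIV. A$i$l * cnj (B$j$l)) - ?c * ?c * (\<Sum>l\<in>UNIV. B$i$l * cnj (B$j$l))" for i j
    by (simp add: matrix_matrix_mult_def madj_def cscale_def algebra_simps sum.distrib
        sum_subtractf sum_distrib_left)
  show ?thesis
    by (simp add: vec_eq_iff L R h)
qed

lemma S_props:
  fixes k :: real
  assumes sa: "self_adjoint (A ** madj B)"
    and det: "det (A - cscale (complex_of_real k) B) \<noteq> 0"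
  shows "Sfrak (\<i> * complex_of_real k) A B =
           - (madj (A + cscale (of_real k) B) ** madj (matrix_inv (A - cscale (of_real k) B)))"
    "self_adjoint (Sfrak (\<i> * complex_of_real k) A B)"
proof -
  define M where "M = A - cscale (of_real k) B"
  define N where "N = A + cscale (of_real k) B"
  define Mi where "Mi = matrix_inv M"
  have inv: "invertible M" using det invertible_det_nz M_def by blast
  have S: "Sfrak (\<i> * complex_of_real k) A B = - (Mi ** N)"
  proof -
    have "A + cscale (\<i> * (\<i> * complex_of_real k)) B = M"
      by (simp add: M_def cscale_def vec_eq_iff)
    moreover have "A - cscale (\<i> * (\<i> * complex_of_real k)) B = N"
      by (simp add: N_def cscale_def vec_eq_iff)
    ultimately show ?thesis by (simp add: Sfrak_def Mi_def)
  qed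
  have c: "N ** madj M = M ** madj N" using comm_NM[OF sa] M_def N_def by simp
  have "Mi ** N = Mi ** N ** (madj M ** madj Mi)"
    using madj_inv[OF inv] by (simp add: Mi_def)
  also have "\<dots> = Mi ** (N ** madj M) ** madj Mi" by (simp add: matrix_mul_assoc)
  also have "\<dots> = (Mi ** M) ** madj N ** madj Mi" by (simp add: c matrix_mul_assoc)
  also have "\<dots> = madj N ** madj Mi" using inv_props[OF inv] by (simp add: Mi_def)
  finally have e: "Mi ** N = madj N ** madj Mi" .
  show "Sfrak (\<i> * complex_of_real k) A B =
           - (madj (A + cscale (of_real k) B) ** madj (matrix_inv (A - cscale (of_real k) B)))"
    using S e by (simp add: Mi_def M_def N_def)
  show "self_adjoint (Sfrak (\<i> * complex_of_real k) A B)"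
    unfolding self_adjoint_def S by (simp add: madj_uminus madj_mult e[symmetric])
qed

theorem corollary2p5:
  fixes A B :: "complex^'n^'n" and \<kappa> :: real
  assumes rank: "range (\<lambda>(x, y). A *v x + B *v y) = (UNIV :: (complex^'n) set)"
    and sa: "self_adjoint (A ** madj B)"
    and kpos: "\<kappa> > 0"
    and det_ne: "det (A - cscale (complex_of_real \<kappa>) B) \<noteq> 0"
  shows "self_adjoint (Sfrak (\<i> * complex_of_real \<kappa>) A B) \<and>
         (nonpos_op (Lop A B) \<longrightarrow>
           (\<forall>\<kappa>'::real. \<kappa>' > 0 \<longrightarrow>
              det (A - cscale (complex_of_real \<kappa>') B) \<noteq> 0 \<and>
              contraction (Sfrak (\<i> * complex_of_real \<kappa>') A B)))"
proof (intro conjI impI allI)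
  show "self_adjoint (Sfrak (\<i> * complex_of_real \<kappa>) A B)"
    using S_props(2)[OF sa det_ne] .
next
  fix k :: real
  assume np: "nonpos_op (Lop A B)" and kp: "k > 0"
  have key: "(madj A *v y) \<bullet> (madj B *v y) \<le> 0" for y
  proof -
    have "Re (cinner (madj B *v y) (Lop A B (madj B *v y))) \<le> 0"
      using np by (simp add: nonpos_op_def)
    then have "Re (cinner y (A *v (madj B *v y))) \<le> 0" by (simp add: Lop_val[OF sa])
    then show ?thesis by (simp add: inner_cinner cinner_madj')
  qed
  define M where "M = A - cscale (of_real k) B"
  define N where "N = A + cscale (of_real k) B"
  have mM: "madj M *v y = madj A *v y - k *\<^sub>R (madj B *v y)" for y
    by (simp add: M_def madj_diff madj_cscale matrix_vector_mult_diff_rdistrib cscale_mv cscale_real)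
  have mN: "madj N *v y = madj A *v y + k *\<^sub>R (madj B *v y)" for y
    by (simp add: N_def madj_add madj_cscale matrix_vector_mult_add_rdistrib cscale_mv cscale_real)
  have ex1: "(u - k *\<^sub>R v) \<bullet> (u - k *\<^sub>R v) = u \<bullet> u - 2 * k * (u \<bullet> v) + k * k * (v \<bullet> v)"
    for u v :: "complex^'n"
    by (simp add: algebra_simps inner_commute)
  have ex2: "(u + k *\<^sub>R v) \<bullet> (u + k *\<^sub>R v) = u \<bullet> u + 2 * k * (u \<bullet> v) + k * k * (v \<bullet> v)"
    for u v :: "complex^'n"
    by (simp add: algebra_simps inner_commute)
  have ker: "y = 0" if "madj M *v y = 0" for y
  proof -
    let ?u = "madj A *v y" and ?v = "madj B *v y"
    have "(?u - k *\<^sub>R ?v) \<bullet> (?u - k *\<^sub>R ?v) = 0" using that mM by simp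
    then have e: "?u \<bullet> ?u - 2 * k * (?u \<bullet> ?v) + k * k * (?v \<bullet> ?v) = 0" by (simp add: ex1)
    have "k * (?u \<bullet> ?v) \<le> 0" using key[of y] kp by (simp add: mult_nonneg_nonpos)
    moreover have "0 \<le> ?u \<bullet> ?u" "0 \<le> k * k * (?v \<bullet> ?v)" using kp by auto
    ultimately have "?u \<bullet> ?u = 0" "k * k * (?v \<bullet> ?v) = 0" using e by linarith+
    then have u0: "?u = 0" and v0: "?v = 0" using kp by auto
    obtain x1 x2 where "y = A *v x1 + B *v x2"
      using rank by (metis (no_types, lifting) UNIV_I case_prod_conv image_iff surj_pair)
    then have "cinner y y = cinner (madj A *v y) x1 + cinner (madj B *v y) x2"
      by (simp add: cinner_add_right cinner_madj)
    then have "cinner y y = 0" using u0 v0 by simp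
    then show "y = 0" by (rule cinner_self_eq0)
  qed
  then have "\<exists>X. X ** madj M = mat 1"
    using matrix_left_invertible_ker by blast
  then obtain X where "X ** madj M = mat 1" by blast
  then have "M ** madj X = mat 1" by (metis madj_mult madj_madj madj_mat1)
  then have invM: "invertible M" using invertible_right_inverse by blast
  then have dM: "det M \<noteq> 0" using invertible_det_nz by blast
  then show "det (A - cscale (complex_of_real k) B) \<noteq> 0" by (simp add: M_def)
  have Seq: "Sfrak (\<i> * complex_of_real k) A B = - (madj N ** madj (matrix_inv M))"
    using S_props(1)[OF sa] dM by (simp add: M_def N_def)
  show "contraction (Sfrak (\<i> * complex_of_real k) A B)"
    unfolding contraction_def
  proof
    fix z
    define y where "y = madj (matrix_inv M) *v z"
    let ?u = "madj A *v y" and ?v = "madj B *v y"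
    have zy: "z = ?u - k *\<^sub>R ?v"
      using madj_inv(2)[OF invM] mM[of y]
      by (metis matrix_vector_mul_assoc matrix_vector_mul_lid y_def)
    have Sz: "Sfrak (\<i> * complex_of_real k) A B *v z = - (?u + k *\<^sub>R ?v)"
    proof -
      have "Sfrak (\<i> * complex_of_real k) A B *v z = - ((madj N ** madj (matrix_inv M)) *v z)"
        by (simp add: Seq mv_uminus)
      also have "\<dots> = - (madj N *v y)" by (simp add: y_def matrix_vector_mul_assoc)
      finally show ?thesis using mN[of y] by simp
    qed
    have "k * (?u \<bullet> ?v) \<le> 0" using key[of y] kp by (simp add: mult_nonneg_nonpos)
    then have "(?u + k *\<^sub>R ?v) \<bullet> (?u + k *\<^sub>R ?v) \<le> (?u - k *\<^sub>R ?v) \<bullet> (?u - k *\<^sub>R ?v)"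
      by (simp add: ex1 ex2)
    then have le: "norm (?u + k *\<^sub>R ?v) \<le> norm (?u - k *\<^sub>R ?v)" by (simp add: norm_le)
    have n1: "norm (Sfrak (\<i> * complex_of_real k) A B *v z) = norm (?u + k *\<^sub>R ?v)"
      unfolding Sz by (rule norm_minus_cancel)
    have n2: "norm z = norm (?u - k *\<^sub>R ?v)" using zy by simp
    show "norm (Sfrak (\<i> * complex_of_real k) A B *v z) \<le> norm z"
      unfolding n1 n2 by (rule le)
  qed
qed

end
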